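(* Let $\Omega\subseteq\mathbb{R}^N$ be a domain satisfying Condition (D). For every $\lambda\in(0,1)$ there exists a constant $C>0$ depending only on $\Omega$ and $\lambda$ such that for every $u\in C^\infty(\overline\Omega)$ with $\lim_{x\in\Omega,|x|\to+\infty}u(x)=0$, $$\int_{\partial\Omega}\exp(\lambda|u|^2)\,\varphi\,dS\le C\exp\!\Big[\big(\|\nabla u\|_{L^\infty(\Omega)}+\|u\|_{L^\infty(\Omega)}\big)^2\Big]\Big(\|\nabla u\|_{L^\infty(\Omega)}\big(\|\nabla u\|_{L^\infty(\Omega)}+\|u\|_{L^\infty(\Omega)}\big)+1\Big).$$
   Context: $\varphi(x)=(2\pi)^{-N/2}e^{-|x|^2/2}$; $dS$ denotes the $(N-1)$-dimensional Hausdorff (surface) measure on $\partial\Omega$. Condition (D) on a domain $\Omega\subseteq\mathbb{R}^N$: there exist $m\in\mathbb{N}$ orthonormal coordinate systems $X_r=(x_r',x_r^N)$, $r=1,\dots,m$; numbers $a_i,b_i\in\mathbb{R}\cup\{\pm\infty\}$ defining $\Delta_r=\{x_r': x_r^i\in(a_i,b_i),\ i=1,\dots,N-1\}$; Lipschitz functions $a_r$ on $\overline{\Delta_r}$; and $\beta>0$ such that $\Lambda_r=\{(x_r',a_r(x_r')): x_r'\in\Delta_r\}\subseteq\partial\Omega$, $\partial\Omega=\bigcup_r\Lambda_r$, $\{(x_r',x_r^N): x_r'\in\Delta_r,\ a_r(x_r')<x_r^N<a_r(x_r')+\beta\}\subseteq\Omega$, and $\{(x_r',x_r^N): x_r'\in\Delta_r,\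 a_r(x_r')-\beta<x_r^N<a_r(x_r')\}$ lies outside $\overline\Omega$. *)

theory Defs
  imports "HOL-Analysis.Analysis"
begin

definition gauss_density :: "'a::euclidean_space \<Rightarrow> real" where
  "gauss_density x = (2 * pi) powr (- real DIM('a) / 2) * exp (- (norm x)\<^sup>2 / 2)"

definition hausdorff_const :: "nat \<Rightarrow> real" where
  "hausdorff_const s = pi powr (real s / 2) / Gamma (real s / 2 + 1) / 2 ^ s"

definition hausdorff_approx :: "nat \<Rightarrow> real \<Rightarrow> 'a::metric_space set \<Rightarrow> ennreal" where
  "hausdorff_approx s \<delta> A =
     (INF C \<in> {C :: nat \<Rightarrow> 'a set. A \<subseteq> (\<Union>n. C n) \<and> (\<forall>n. bounded (C n) \<and> diameter (C n) \<le> \<delta>)}.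
        (\<Sum>n. ennreal (if C n = {} then 0 else hausdorff_const s * diameter (C n) ^ s)))"

definition hausdorff_outer :: "nat \<Rightarrow> 'a::metric_space set \<Rightarrow> ennreal" where
  "hausdorff_outer s A = (SUP \<delta> \<in> {0<..}. hausdorff_approx s \<delta> A)"

definition hausdorff_measure :: "nat \<Rightarrow> 'a::metric_space measure" where
  "hausdorff_measure s = measure_of UNIV
     {A. \<forall>X. hausdorff_outer s X = hausdorff_outer s (X \<inter> A) + hausdorff_outer s (X - A)}
     (hausdorff_outer s)"

fun C_k_on :: "nat \<Rightarrow> 'a::euclidean_space set \<Rightarrow> ('a \<Rightarrow> real) \<Rightarrow> bool" where
  "C_k_on 0 U f = continuous_on U f"
| "C_k_on (Suc k) U f = (\<exists>f'. (\<forall>x\<in>U. (f has_derivative f' x) (at x)) \<and> (\<forall>v. C_k_on k U (\<lambda>x. f' x v)))"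

definition smooth_on :: "'a::euclidean_space set \<Rightarrow> ('a \<Rightarrow> real) \<Rightarrow> bool" where
  "smooth_on U f \<longleftrightarrow> open U \<and> (\<forall>k. C_k_on k U f)"

text \<open>u in C^infinity of the closure of Omega: restriction of a function smooth on an open
  neighbourhood of the closure.\<close>
definition smooth_on_closure :: "'a::euclidean_space set \<Rightarrow> ('a \<Rightarrow> real) \<Rightarrow> bool" where
  "smooth_on_closure \<Omega> u \<longleftrightarrow> (\<exists>U. closure \<Omega> \<subseteq> U \<and> smooth_on U u)"

definition grad :: "('a::euclidean_space \<Rightarrow> real) \<Rightarrow> 'a \<Rightarrow> 'a" where
  "grad u x = (\<Sum>b\<in>Basis. frechet_derivative u (at x) b *\<^sub>R b)"

definition domain :: "'a::euclidean_space set \<Rightarrow> bool" where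
  "domain \<Omega> \<longleftrightarrow> open \<Omega> \<and> connected \<Omega> \<and> \<Omega> \<noteq> {}"

text \<open>Local base \<Delta> (in the hyperplane orthogonal to the distinguished basis vector e,
  which plays the role of the N-th coordinate axis).\<close>
definition base_box :: "'a::euclidean_space \<Rightarrow> ('a \<Rightarrow> ereal) \<Rightarrow> ('a \<Rightarrow> ereal) \<Rightarrow> 'a set" where
  "base_box e lo hi = {y. y \<bullet> e = 0 \<and> (\<forall>b\<in>Basis - {e}. lo b < ereal (y \<bullet> b) \<and> ereal (y \<bullet> b) < hi b)}"

text \<open>Coordinate system r: local coordinates (y, t) correspond to the point c r + T r (y + t e).\<close>
definition condition_D :: "'a::euclidean_space set \<Rightarrow> bool" where
  "condition_D \<Omega> \<longleftrightarrow>
    (\<exists>m::nat. \<exists>c T. \<exists>e\<in>Basis. \<exists>lo hi. \<exists>a :: nat \<Rightarrow> 'a \<Rightarrow> real. \<exists>\<beta>>0.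
      (\<forall>r<m. orthogonal_transformation (T r)
        \<and> (\<exists>L. L-lipschitz_on (closure (base_box e lo hi)) (a r))
        \<and> {c r + T r (y + a r y *\<^sub>R e) | y. y \<in> base_box e lo hi} \<subseteq> frontier \<Omega>
        \<and> {c r + T r (y + t *\<^sub>R e) | y t. y \<in> base_box e lo hi \<and> a r y < t \<and> t < a r y + \<beta>} \<subseteq> \<Omega>
        \<and> {c r + T r (y + t *\<^sub>R e) | y t. y \<in> base_box e lo hi \<and> a r y - \<beta> < t \<and> t < a r y}
            \<inter> closure \<Omega> = {})
      \<and> frontier \<Omega> = (\<Union>r<m. {c r + T r (y + a r y *\<^sub>R e) | y. y \<in> base_box e lo hi}))"

end

theory Submission
  imports Defs
begin

lemma hconst_nonneg: "0 \<le> hausdorff_const s"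
  unfolding hausdorff_const_def
  by (intro divide_nonneg_nonneg) (auto intro: less_imp_le Gamma_real_pos)

lemma haus_approx_finite_cover:
  assumes fin: "finite I" and cov: "A \<subseteq> (\<Union>i\<in>I. D i)"
    and bd: "\<And>i. i \<in> I \<Longrightarrow> bounded (D i) \<and> diameter (D i) \<le> \<delta>" and d0: "0 \<le> \<delta>"
  shows "hausdorff_approx s \<delta> A \<le> ennreal (\<Sum>i\<in>I. hausdorff_const s * diameter (D i) ^ s)"
proof -
  obtain h where h: "bij_betw h {0..<card I} I" using ex_bij_betw_nat_finite[OF fin] by blast
  have hI: "\<And>k. k < card I \<Longrightarrow> h k \<in> I" using h by (auto simp: bij_betw_def)
  define C where "C k = (if k < card I then D (h k) else {})" for k
  have Cin: "C \<in> {C. A \<subseteq> (\<Union>n. C n) \<and> (\<forall>n. bounded (C n) \<and> diameter (C n) \<le> \<delta>)}"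
  proof safe
    fix x assume "x \<in> A"
    then obtain i where i: "i \<in> I" "x \<in> D i" using cov by blast
    then obtain k where "k < card I" "h k = i" using h by (force simp: bij_betw_def)
    then show "x \<in> (\<Union>n. C n)" using i by (auto simp: C_def)
  next
    fix n
    show "bounded (C n)" using bd hI by (auto simp: C_def)
    show "diameter (C n) \<le> \<delta>" using bd hI d0 by (auto simp: C_def)
  qed
  let ?g = "\<lambda>n. ennreal (if C n = {} then 0 else hausdorff_const s * diameter (C n) ^ s)"
  have "hausdorff_approx s \<delta> A \<le> (\<Sum>n. ?g n)"
    unfolding hausdorff_approx_def by (rule INF_lower[OF Cin])
  also have "(\<Sum>n. ?g n) = (\<Sum>n\<in>{0..<card I}. ?g n)"
    by (rule suminf_finite) (auto simp: C_def)
  also have "\<dots> \<le> (\<Sum>n\<in>{0..<card I}. ennreal (hausdorff_const s * diameter (D (h n)) ^ s))"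
    by (intro sum_mono) (auto simp: C_def intro!: mult_nonneg_nonneg hconst_nonneg)
  also have "\<dots> = ennreal (\<Sum>n\<in>{0..<card I}. hausdorff_const s * diameter (D (h n)) ^ s)"
    by (rule sum_ennreal) (auto intro!: mult_nonneg_nonneg hconst_nonneg zero_le_power diameter_ge_0 dest: hI bd)
  also have "(\<Sum>n\<in>{0..<card I}. hausdorff_const s * diameter (D (h n)) ^ s)
     = (\<Sum>i\<in>I. hausdorff_const s * diameter (D i) ^ s)"
    using sum.reindex_bij_betw[OF h, of "\<lambda>i. hausdorff_const s * diameter (D i) ^ s"] by simp
  finally show ?thesis .
qed

lemma haus_outer_le:
  assumes "\<And>\<delta>. 0 < \<delta> \<Longrightarrow> hausdorff_approx s \<delta> A \<le> B"
  shows "hausdorff_outer s A \<le> B"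
  unfolding hausdorff_outer_def using assms by (auto intro!: SUP_least)

lemma emeasure_haus_le: "emeasure (hausdorff_measure s) X \<le> hausdorff_outer s X"
  unfolding hausdorff_measure_def emeasure_measure_of_conv by auto

lemma bounded_of_dist:
  assumes "\<And>p q. p \<in> S \<Longrightarrow> q \<in> S \<Longrightarrow> norm (p - q) \<le> d"
  shows "bounded S"
proof (cases "S = {}")
  case False
  then obtain x where "x \<in> S" by blast
  then show ?thesis using assms unfolding bounded_def by (auto simp: dist_norm)
qed simp

lemma graph_haus_bound:
  fixes e :: "'a::euclidean_space" and F :: "nat \<Rightarrow> 'a \<Rightarrow> 'b::euclidean_space"
  assumes e: "e \<in> Basis"
    and F: "\<And>j y z. j < m \<Longrightarrow> y \<in> \<Delta> \<Longrightarrow> z \<in> \<Delta> \<Longrightarrow> norm (F j y - F j z) \<le> LL * norm (y - z)"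
    and LL: "0 \<le> LL"
    and Dsub: "\<And>y. y \<in> \<Delta> \<Longrightarrow> y \<bullet> e = 0"
    and R: "0 < R"
    and A: "A \<subseteq> {F j y | j y. j < m \<and> y \<in> \<Delta> \<and> norm y < R}"
  shows "hausdorff_outer (DIM('a) - 1) A \<le> ennreal (real m * (2 * LL * DIM('a) * R) ^ (DIM('a) - 1) * hausdorff_const (DIM('a) - 1))"
proof (rule haus_outer_le)
  fix \<delta> :: real assume d: "0 < \<delta>"
  define n :: nat where "n = nat \<lceil>LL * DIM('a) * R / \<delta>\<rceil> + 1"
  have n1: "1 \<le> real n" by (simp add: n_def)
  have "LL * DIM('a) * R / \<delta> \<le> real n" unfolding n_def
    using real_nat_ceiling_ge[of "LL * DIM('a) * R / \<delta>"] by simp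
  define w where "w = R / real n"
  have w0: "0 < w" using R n1 by (simp add: w_def)
  have Lw: "LL * DIM('a) * w \<le> \<delta>"
  proof -
    have "LL * DIM('a) * R \<le> real n * \<delta>"
      using \<open>LL * DIM('a) * R / \<delta> \<le> real n\<close> d by (simp add: divide_le_eq)
    then show ?thesis using n1 by (simp add: w_def field_simps)
  qed
  define K where "K = PiE (Basis - {e}) (\<lambda>_. {..<2*n})"
  define Q where "Q k = {y::'a. y \<bullet> e = 0 \<and> (\<forall>b\<in>Basis-{e}. - R + real (k b) * w \<le> y \<bullet> b \<and> y \<bullet> b \<le> - R + (real (k b) + 1) * w)}" for k
  define I where "I = {..<m} \<times> K"
  define D where "D = (\<lambda>(j,k). F j ` (Q k \<inter> \<Delta>))"
  have finI: "finite I" unfolding I_def K_def by (auto intro!: finite_PiE)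
  have cov: "A \<subseteq> (\<Union>i\<in>I. D i)"
  proof
    fix x assume "x \<in> A"
    then obtain j y where jy: "x = F j y" "j < m" "y \<in> \<Delta>" "norm y < R" using A by blast
    define k where "k = restrict (\<lambda>b. nat \<lfloor>(y \<bullet> b + R) / w\<rfloor>) (Basis - {e})"
    have kb: "- R + real (k b) * w \<le> y \<bullet> b \<and> y \<bullet> b \<le> - R + (real (k b) + 1) * w \<and> k b < 2 * n"
      if b: "b \<in> Basis - {e}" for b
    proof -
      have yb: "\<bar>y \<bullet> b\<bar> < R" using Basis_le_norm[of b y] b jy by auto
      define t where "t = (y \<bullet> b + R) / w"
      have t0: "0 \<le> t" using yb w0 by (simp add: t_def)
      have t2: "t < 2 * real n" using yb w0 n1 by (simp add: t_def w_def field_simps)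
      have kbt: "real (k b) = of_int \<lfloor>t\<rfloor>" using b t0 by (simp add: k_def t_def)
      have tw: "t * w = y \<bullet> b + R" using w0 by (simp add: t_def)
      have "of_int \<lfloor>t\<rfloor> \<le> t" "t \<le> of_int \<lfloor>t\<rfloor> + 1" by linarith+
      then have "of_int \<lfloor>t\<rfloor> * w \<le> t * w" "t * w \<le> (of_int \<lfloor>t\<rfloor> + 1) * w"
        using w0 by (simp_all add: mult_right_mono)
      then have "real (k b) * w \<le> y \<bullet> b + R" "y \<bullet> b + R \<le> (real (k b) + 1) * w"
        using tw kbt by simp_all
      moreover have "k b < 2 * n" using kbt t2 t0
        by (metis floor_less_iff of_int_of_nat_eq of_nat_less_iff of_int_less_iff of_nat_mult of_nat_numeral
            linorder_not_le order_le_less_trans floor_of_nat)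
      ultimately show ?thesis by linarith
    qed
    have "k \<in> K" using kb unfolding K_def k_def by (auto simp: PiE_iff)
    moreover have "y \<in> Q k" using kb Dsub jy by (auto simp: Q_def)
    ultimately show "x \<in> (\<Union>i\<in>I. D i)" using jy unfolding I_def D_def by force
  qed
  have dist_D: "norm (p - q) \<le> LL * DIM('a) * w" if i: "i \<in> I" and pq: "p \<in> D i" "q \<in> D i" for i p q
  proof -
    obtain j k where ijk: "i = (j, k)" "j < m" using i by (auto simp: I_def)
    obtain y z where yz: "p = F j y" "q = F j z" "y \<in> Q k \<inter> \<Delta>" "z \<in> Q k \<inter> \<Delta>"
      using pq ijk by (auto simp: D_def)
    have "norm (p - q) \<le> LL * norm (y - z)" using F[of j y z] yz ijk by auto
    also have "norm (y - z) \<le> (\<Sum>b\<in>Basis. \<bar>(y - z) \<bullet> b\<bar>)" by (rule norm_le_l1)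
    also have "\<dots> \<le> (\<Sum>b\<in>(Basis::'a set). w)"
    proof (rule sum_mono)
      fix b :: 'a assume b: "b \<in> Basis"
      show "\<bar>(y - z) \<bullet> b\<bar> \<le> w"
      proof (cases "b = e")
        case True then show ?thesis using yz w0 by (simp add: Q_def inner_diff_left)
      next
        case False
        then have "b \<in> Basis - {e}" using b by auto
        then have "- R + real (k b) * w \<le> y \<bullet> b \<and> y \<bullet> b \<le> - R + (real (k b) + 1) * w"
          "- R + real (k b) * w \<le> z \<bullet> b \<and> z \<bullet> b \<le> - R + (real (k b) + 1) * w"
          using yz unfolding Q_def by blast+
        then show ?thesis by (simp add: inner_diff_left abs_le_iff algebra_simps)
      qed
    qed
    also have "\<dots> = DIM('a) * w" by simp
    finally show ?thesis using LL by (simp add: mult.assoc mult_left_mono)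
  qed
  have bdD: "bounded (D i) \<and> diameter (D i) \<le> \<delta>" if "i \<in> I" for i
  proof
    show "bounded (D i)" using dist_D[OF that] by (rule bounded_of_dist)
    have "diameter (D i) \<le> LL * DIM('a) * w"
      by (rule diameter_le) (use dist_D[OF that] LL w0 in auto)
    then show "diameter (D i) \<le> \<delta>" using Lw by linarith
  qed
  have "hausdorff_approx (DIM('a) - 1) \<delta> A \<le> ennreal (\<Sum>i\<in>I. hausdorff_const (DIM('a) - 1) * diameter (D i) ^ (DIM('a) - 1))"
    by (rule haus_approx_finite_cover[OF finI cov bdD]) (use d in auto)
  also have "\<dots> \<le> ennreal (\<Sum>i\<in>I. hausdorff_const (DIM('a) - 1) * (LL * DIM('a) * w) ^ (DIM('a) - 1))"
  proof (intro ennreal_leI sum_mono mult_left_mono hconst_nonneg power_mono)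
    fix i assume i: "i \<in> I"
    show "diameter (D i) \<le> LL * DIM('a) * w"
      by (rule diameter_le) (use dist_D[OF i] LL w0 in auto)
    show "0 \<le> diameter (D i)" using bdD[OF i] by (simp add: diameter_ge_0)
  qed
  also have "(\<Sum>i\<in>I. hausdorff_const (DIM('a) - 1) * (LL * DIM('a) * w) ^ (DIM('a) - 1))
      = real (card I) * hausdorff_const (DIM('a) - 1) * (LL * DIM('a) * w) ^ (DIM('a) - 1)" by simp
  also have "real (card I) * hausdorff_const (DIM('a) - 1) * (LL * DIM('a) * w) ^ (DIM('a) - 1)
      = real m * (2 * LL * DIM('a) * R) ^ (DIM('a) - 1) * hausdorff_const (DIM('a) - 1)"
  proof -
    have "card I = m * (2 * n) ^ (DIM('a) - 1)"
      using e by (simp add: I_def K_def card_cartesian_product card_PiE card_Diff_singleton)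
    moreover have "(2 * real n) * (LL * DIM('a) * w) = 2 * LL * DIM('a) * R"
      using n1 by (simp add: w_def field_simps)
    then have "(2 * real n) ^ (DIM('a) - 1) * (LL * DIM('a) * w) ^ (DIM('a) - 1) = (2 * LL * DIM('a) * R) ^ (DIM('a) - 1)"
      by (metis power_mult_distrib)
    moreover have "real (card I) = real m * (2 * real n) ^ (DIM('a) - 1)"
      using \<open>card I = _\<close> by simp
    ultimately show ?thesis
      by (simp only: mult_ac)
  qed
  finally show "hausdorff_approx (DIM('a) - 1) \<delta> A \<le> ennreal (real m * (2 * LL * DIM('a) * R) ^ (DIM('a) - 1) * hausdorff_const (DIM('a) - 1))" .
qed

lemma pow_le_exp: assumes "0 \<le> (x::real)" shows "x ^ s \<le> (real s + 1) ^ s * exp x"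
proof -
  define c where "c = real s + 1"
  have c: "1 \<le> c" by (simp add: c_def)
  have "x \<le> c * (1 + x / c)" using c by (simp add: field_simps)
  also have "\<dots> \<le> c * exp (x / c)" using c by (intro mult_left_mono) auto
  finally have "x ^ s \<le> (c * exp (x / c)) ^ s" using assms by (intro power_mono) auto
  also have "\<dots> = c ^ s * exp (real s * (x / c))" by (simp only: power_mult_distrib exp_of_nat_mult)
  also have "exp (real s * (x / c)) \<le> exp x"
  proof -
    have "real s * (x / c) \<le> x" using assms c by (simp add: c_def field_simps)
    then show ?thesis by simp
  qed
  finally show ?thesis using c by (simp add: c_def mult_left_mono)
qed

lemma layer_bound:
  fixes S :: "'a::euclidean_space set"
  assumes H: "\<And>r A. 0 \<le> r \<Longrightarrow> A \<subseteq> S \<inter> cball 0 r \<Longrightarrow> hausdorff_outer s A \<le> ennreal (c1 * (r + c2) ^ k0)"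
    and c1: "0 \<le> c1" and c2: "0 \<le> c2"
  shows "\<exists>B\<ge>0. \<forall>A f. 0 \<le> A \<longrightarrow> (\<forall>x\<in>S. 0 \<le> f x \<and> f x \<le> A * exp (- (norm x)\<^sup>2 / 2)) \<longrightarrow>
     (\<integral>\<^sup>+ x \<in> S. ennreal (f x) \<partial>hausdorff_measure s) \<le> ennreal (A * B)"
proof -
  define q :: real where "q = exp (-1)"
  have q: "0 < q" "q < 1" by (auto simp: q_def)
  define c3 where "c3 = c1 * (real k0 + 1) ^ k0 * exp (2 + c2)"
  have c3: "0 \<le> c3" using c1 by (simp add: c3_def)
  define B where "B = c3 / (1 - q)"
  have B: "0 \<le> B" using c3 q by (simp add: B_def)
  have sumq: "(\<lambda>k. c3 * q ^ k) sums B" unfolding B_def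
    using sums_mult[OF geometric_sums[of q], of c3] q by (simp add: field_simps)
  show ?thesis
  proof (intro exI[of _ B] conjI allI impI B)
    fix A :: real and f assume A: "0 \<le> A" and f: "\<forall>x\<in>S. 0 \<le> f x \<and> f x \<le> A * exp (- (norm x)\<^sup>2 / 2)"
    let ?M = "hausdorff_measure s :: 'a measure"
    let ?F = "\<lambda>x. ennreal (f x) * indicator S x"
    have "integral\<^sup>N ?M ?F \<le> ennreal (A * B)"
      unfolding nn_integral_def
    proof (rule SUP_least, safe)
      fix g assume gs: "simple_function ?M g" and gF: "g \<le> ?F"
      have gm[measurable]: "g \<in> borel_measurable ?M" using gs by (rule borel_measurable_simple_function)
      have spc: "space ?M = UNIV" by (simp add: hausdorff_measure_def space_measure_of_conv)
      define a where "a k = A * exp (- 2 * real k)" for k :: nat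
      define E where "E k = {x. ennreal (a (Suc k)) < g x \<and> g x \<le> ennreal (a k)}" for k
      have Em[measurable]: "E k \<in> sets ?M" for k
      proof -
        have "{x \<in> space ?M. ennreal (a (Suc k)) < g x \<and> g x \<le> ennreal (a k)} \<in> sets ?M" by measurable
        then show ?thesis using spc by (simp add: E_def)
      qed
      have gx: "x \<in> S \<and> g x \<le> ennreal (A * exp (- (norm x)\<^sup>2 / 2))" if "0 < g x" for x
      proof -
        have le: "g x \<le> ennreal (f x) * indicator S x" using gF by (simp add: le_fun_def)
        show ?thesis
        proof (cases "x \<in> S")
          case True
          then have "g x \<le> ennreal (f x)" using le by simp
          also have "\<dots> \<le> ennreal (A * exp (- (norm x)\<^sup>2 / 2))" using f True by (intro ennreal_leI) auto
          finally show ?thesis using True by simp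
        next
          case False then show ?thesis using le that by simp
        qed
      qed
      have ptw: "g x \<le> (\<Sum>k. ennreal (a k) * indicator (E k) x)" for x
      proof (cases "g x = 0")
        case False
        then have gp: "0 < g x" by (simp add: zero_less_iff_neq_zero)
        have gA: "g x \<le> ennreal A"
        proof -
          have "A * exp (- (norm x)\<^sup>2 / 2) \<le> A * 1" using A by (intro mult_left_mono) auto
          then show ?thesis using gx[OF gp] by (metis mult.right_neutral ennreal_leI order.trans)
        qed
        then have gt: "g x < top" using top.not_eq_extremum by (metis ennreal_less_top order_le_less_trans)
        define v where "v = enn2real (g x)"
        have gv: "g x = ennreal v" using gt by (simp add: v_def)
        have v0: "0 < v" using gp gv by (metis ennreal_less_zero_iff enn2real_nonneg v_def order_le_less)
        have vA: "v \<le> A" using gA gv A by simp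
        define t where "t = ln (A / v) / 2"
        have t0: "0 \<le> t" using v0 vA by (simp add: t_def)
        define k where "k = nat \<lfloor>t\<rfloor>"
        have kt: "real k \<le> t" "t < real k + 1" using t0 unfolding k_def by linarith+
        have Av: "A / v = exp (2 * t)" using v0 vA by (simp add: t_def)
        have "a k = v * (exp (2 * t) * exp (- 2 * real k))" using Av v0 by (simp add: a_def field_simps)
        also have "\<dots> = v * exp (2 * t - 2 * real k)" by (simp add: exp_add[symmetric])
        finally have ak: "v \<le> a k" using kt v0 by simp
        have "a (Suc k) = v * (exp (2 * t) * exp (- 2 * real (Suc k)))" using Av v0 by (simp add: a_def field_simps)
        also have "\<dots> = v * exp (2 * t - 2 * real (Suc k))" by (simp add: exp_add[symmetric])
        finally have ak1: "a (Suc k) < v" using kt v0 by simp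
        have a0: "0 \<le> a (Suc k)" using A by (simp add: a_def)
        have "x \<in> E k" using ak ak1 a0 gv unfolding E_def by (simp add: ennreal_less_iff)
        then have "g x \<le> ennreal (a k) * indicator (E k) x" using gv ak by (simp add: ennreal_leI)
        also have "\<dots> \<le> (\<Sum>k. ennreal (a k) * indicator (E k) x)"
        proof -
          have gen: "h k \<le> (\<Sum>j. h j)" for h :: "nat \<Rightarrow> ennreal"
            using sum_le_suminf[of h "{k}"] by (simp add: summableI)
          show ?thesis by (rule gen[of "\<lambda>j. ennreal (a j) * indicator (E j) x"])
        qed
        finally show ?thesis .
      qed simp
      have ES: "E k \<subseteq> S \<inter> cball 0 (real k + 2)" for k
      proof
        fix x assume x: "x \<in> E k"
        have a0: "0 \<le> a (Suc k)" using A by (simp add: a_def)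
        have ag: "ennreal (a (Suc k)) < g x" using x by (simp add: E_def)
        then have gp: "0 < g x" by (rule le_less_trans[OF zero_le])
        have "ennreal (a (Suc k)) < ennreal (A * exp (- (norm x)\<^sup>2 / 2))"
          using ag gx[OF gp] by (blast intro: less_le_trans)
        then have "A * exp (- 2 * real (Suc k)) < A * exp (- (norm x)\<^sup>2 / 2)"
          using a0 by (simp add: ennreal_less_iff a_def)
        moreover have "A \<noteq> 0" using calculation by auto
        ultimately have "exp (- 2 * real (Suc k)) < exp (- (norm x)\<^sup>2 / 2)" using A
          by (simp add: mult_less_cancel_left_pos)
        then have "- 2 * real (Suc k) < - (norm x)\<^sup>2 / 2" by simp
        then have "(norm x)\<^sup>2 \<le> (real k + 2)\<^sup>2"
        proof -
          assume h: "- 2 * real (Suc k) < - (norm x)\<^sup>2 / 2"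
          have h1: "norm x * norm x < 4 + real k * 4" using h by (simp add: power2_eq_square algebra_simps)
          have h2: "(real k + 2)\<^sup>2 = 4 + (real k * real k + real k * 4)" by (simp add: power2_eq_square algebra_simps)
          have h3: "0 \<le> real k * real k" by simp
          show ?thesis unfolding h2 using h1 h3 by (simp only: power2_eq_square)
        qed
        then have "norm x \<le> real k + 2" by (rule power2_le_imp_le) simp
        then show "x \<in> S \<inter> cball 0 (real k + 2)" using gx[OF gp] by simp
      qed
      have "integral\<^sup>S ?M g = integral\<^sup>N ?M g" by (rule nn_integral_eq_simple_integral[symmetric, OF gs])
      also have "\<dots> \<le> integral\<^sup>N ?M (\<lambda>x. \<Sum>k. ennreal (a k) * indicator (E k) x)"
        by (intro nn_integral_mono ptw)
      also have "\<dots> = (\<Sum>k. integral\<^sup>N ?M (\<lambda>x. ennreal (a k) * indicator (E k) x))"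
        by (rule nn_integral_suminf) measurable
      also have "\<dots> = (\<Sum>k. ennreal (a k) * emeasure ?M (E k))"
        by (simp add: nn_integral_cmult_indicator)
      also have "\<dots> \<le> (\<Sum>k. ennreal (A * (c3 * q ^ k)))"
      proof (rule suminf_le[OF _ summableI summableI])
        fix k
        have "emeasure ?M (E k) \<le> hausdorff_outer s (E k)" by (rule emeasure_haus_le)
        also have "\<dots> \<le> ennreal (c1 * ((real k + 2) + c2) ^ k0)" by (rule H[OF _ ES]) simp
        finally have "ennreal (a k) * emeasure ?M (E k) \<le> ennreal (a k) * ennreal (c1 * ((real k + 2) + c2) ^ k0)"
          by (rule mult_left_mono) simp
        also have "\<dots> = ennreal (a k * (c1 * ((real k + 2) + c2) ^ k0))"
        proof -
          have "0 \<le> a k" using A by (simp add: a_def)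
          moreover have "0 \<le> c1 * ((real k + 2) + c2) ^ k0" using c1 c2 by simp
          ultimately show ?thesis by (simp only: ennreal_mult)
        qed
        also have "\<dots> \<le> ennreal (A * (c3 * q ^ k))"
        proof (rule ennreal_leI)
          have "((real k + 2) + c2) ^ k0 \<le> (real k0 + 1) ^ k0 * exp ((real k + 2) + c2)"
            by (rule pow_le_exp) (use c2 in simp)
          then have "c1 * ((real k + 2) + c2) ^ k0 \<le> c1 * ((real k0 + 1) ^ k0 * exp ((real k + 2) + c2))"
            by (rule mult_left_mono[OF _ c1])
          then have "a k * (c1 * ((real k + 2) + c2) ^ k0) \<le> a k * (c1 * ((real k0 + 1) ^ k0 * exp ((real k + 2) + c2)))"
            by (rule mult_left_mono) (use A in \<open>simp add: a_def\<close>)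
          also have "\<dots> = A * (c3 * q ^ k)"
          proof -
            have "exp (- 2 * real k) * exp ((real k + 2) + c2) = exp (2 + c2) * exp (-1) ^ k"
              by (simp add: exp_add[symmetric] exp_of_nat_mult[symmetric] algebra_simps)
            then show ?thesis by (simp add: a_def c3_def q_def mult_ac)
          qed
          finally show "a k * (c1 * ((real k + 2) + c2) ^ k0) \<le> A * (c3 * q ^ k)" .
        qed
        finally show "ennreal (a k) * emeasure ?M (E k) \<le> ennreal (A * (c3 * q ^ k))" .
      qed
      also have "\<dots> = ennreal (A * B)"
      proof -
        have "(\<lambda>k. A * (c3 * q ^ k)) sums (A * B)" by (rule sums_mult[OF sumq])
        moreover have "\<And>k. 0 \<le> A * (c3 * q ^ k)" using A c3 q by simp
        moreover have "0 \<le> A * B" using A B by simp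
        ultimately have "(\<lambda>k. ennreal (A * (c3 * q ^ k))) sums ennreal (A * B)" by simp
        then show ?thesis by (rule sums_unique[symmetric])
      qed
      finally show "integral\<^sup>S ?M g \<le> ennreal (A * B)" .
    qed
    then show "(\<integral>\<^sup>+ x \<in> S. ennreal (f x) \<partial>?M) \<le> ennreal (A * B)" by simp
  qed
qed

lemma frontier_hbound:
  fixes \<Omega> :: "'a::euclidean_space set"
  assumes "condition_D \<Omega>"
  shows "\<exists>c1 c2. 0 \<le> c1 \<and> 0 \<le> c2 \<and> (\<forall>r A. 0 \<le> r \<longrightarrow> A \<subseteq> frontier \<Omega> \<inter> cball 0 r \<longrightarrow>
      hausdorff_outer (DIM('a) - 1) A \<le> ennreal (c1 * (r + c2) ^ (DIM('a) - 1)))"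
proof -
  obtain m :: nat and c T and e :: 'a and lo hi a \<beta> where e: "e \<in> Basis" and b: "\<beta> > 0" and
    H: "\<forall>r<m. orthogonal_transformation (T r)
        \<and> (\<exists>L. L-lipschitz_on (closure (base_box e lo hi)) (a r))
        \<and> {c r + T r (y + a r y *\<^sub>R e) | y. y \<in> base_box e lo hi} \<subseteq> frontier \<Omega>
        \<and> {c r + T r (y + t *\<^sub>R e) | y t. y \<in> base_box e lo hi \<and> a r y < t \<and> t < a r y + \<beta>} \<subseteq> \<Omega>
        \<and> {c r + T r (y + t *\<^sub>R e) | y t. y \<in> base_box e lo hi \<and> a r y - \<beta> < t \<and> t < a r y}
            \<inter> closure \<Omega> = {}"
    and fr: "frontier \<Omega> = (\<Union>r<m. {c r + T r (y + a r y *\<^sub>R e) | y. y \<in> base_box e lo hi})"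
    using assms unfolding condition_D_def by (elim exE bexE conjE) (rule that; assumption)
  have P: "orthogonal_transformation (T r) \<and> (\<exists>L. L-lipschitz_on (closure (base_box e lo hi)) (a r))"
    if "r < m" for r using H that by simp
  define \<Delta> where "\<Delta> = base_box e lo hi"
  obtain Lf where Lf: "\<forall>r<m. (Lf r)-lipschitz_on (closure \<Delta>) (a r)"
  proof -
    have "\<forall>r\<in>{..<m}. \<exists>L. L-lipschitz_on (closure \<Delta>) (a r)" using P unfolding \<Delta>_def by simp
    from bchoice[OF this] obtain Lf where "\<forall>r\<in>{..<m}. (Lf r)-lipschitz_on (closure \<Delta>) (a r)" by blast
    then show ?thesis using that by auto
  qed
  define LL where "LL = 1 + (\<Sum>r<m. \<bar>Lf r\<bar>)"
  define Cm where "Cm = (\<Sum>r<m. norm (c r))"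
  define F where "F j y = c j + T j (y + a j y *\<^sub>R e)" for j y
  have LL0: "0 \<le> LL" by (simp add: LL_def sum_nonneg)
  have Cm0: "0 \<le> Cm" by (simp add: Cm_def sum_nonneg)
  have ne: "norm e = 1" using e by simp
  have Dsub: "y \<bullet> e = 0" if "y \<in> \<Delta>" for y using that by (simp add: \<Delta>_def base_box_def)
  have Flip: "norm (F j y - F j z) \<le> LL * norm (y - z)" if j: "j < m" and yz: "y \<in> \<Delta>" "z \<in> \<Delta>" for j y z
  proof -
    have lin: "linear (T j)" using P[OF j] orthogonal_transformation_linear by blast
    have "F j y - F j z = T j ((y - z) + (a j y - a j z) *\<^sub>R e)"
      by (simp add: F_def linear_diff[OF lin, symmetric] algebra_simps)
    then have "norm (F j y - F j z) = norm ((y - z) + (a j y - a j z) *\<^sub>R e)"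
      using P[OF j] orthogonal_transformation_norm by metis
    also have "\<dots> \<le> norm (y - z) + \<bar>a j y - a j z\<bar>" using norm_triangle_ineq[of "y - z" "(a j y - a j z) *\<^sub>R e"] ne by simp
    also have "\<bar>a j y - a j z\<bar> \<le> Lf j * norm (y - z)"
      using lipschitz_onD[of "Lf j" "closure \<Delta>" "a j" y z] Lf j yz closure_subset by (force simp: dist_norm)
    also have "Lf j \<le> \<bar>Lf j\<bar>" by simp
    also have "\<bar>Lf j\<bar> \<le> (\<Sum>r<m. \<bar>Lf r\<bar>)" using j by (intro member_le_sum) auto
    finally show ?thesis by (simp add: LL_def algebra_simps mult_right_mono)
  qed
  define c1 where "c1 = real m * (2 * LL * DIM('a)) ^ (DIM('a) - 1) * hausdorff_const (DIM('a) - 1)"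
  have c10: "0 \<le> c1" using LL0 by (simp add: c1_def hconst_nonneg)
  have c20: "0 \<le> Cm + 1" using Cm0 by simp
  have main: "hausdorff_outer (DIM('a) - 1) A \<le> ennreal (c1 * (r + (Cm + 1)) ^ (DIM('a) - 1))"
    if r: "0 \<le> r" and A: "A \<subseteq> frontier \<Omega> \<inter> cball 0 r" for r A
  proof -
    have "A \<subseteq> {F j y | j y. j < m \<and> y \<in> \<Delta> \<and> norm y < r + Cm + 1}"
    proof
      fix x assume "x \<in> A"
      then have x: "x \<in> frontier \<Omega>" "norm x \<le> r" using A by auto
      then obtain j y where jy: "j < m" "y \<in> \<Delta>" "x = F j y" using fr by (auto simp: F_def \<Delta>_def)
      have "(norm (y + a j y *\<^sub>R e))\<^sup>2 = (norm y)\<^sup>2 + (\<bar>a j y\<bar> * norm e)\<^sup>2"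
        using norm_add_Pythagorean[of y "a j y *\<^sub>R e"] Dsub[OF jy(2)] by (simp add: orthogonal_def)
      then have "norm y ^ 2 \<le> norm (y + a j y *\<^sub>R e) ^ 2" by simp
      then have "norm y \<le> norm (y + a j y *\<^sub>R e)" by (rule power2_le_imp_le) simp
      also have "\<dots> = norm (x - c j)"
      proof -
        have "x - c j = T j (y + a j y *\<^sub>R e)" using jy by (simp add: F_def)
        moreover have "orthogonal_transformation (T j)" using P[OF jy(1)] by blast
        ultimately show ?thesis by (simp add: orthogonal_transformation_norm)
      qed
      also have "\<dots> \<le> norm x + norm (c j)" by (rule norm_triangle_ineq4)
      also have "norm (c j) \<le> Cm" unfolding Cm_def using jy by (intro member_le_sum) auto
      finally have "norm y < r + Cm + 1" using x by linarith
      then show "x \<in> {F j y | j y. j < m \<and> y \<in> \<Delta> \<and> norm y < r + Cm + 1}" using jy by blast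
    qed
    then have "hausdorff_outer (DIM('a) - 1) A \<le> ennreal (real m * (2 * LL * DIM('a) * (r + Cm + 1)) ^ (DIM('a) - 1) * hausdorff_const (DIM('a) - 1))"
      using r Cm0 by (intro graph_haus_bound[OF e Flip LL0 Dsub]) auto
    also have "real m * (2 * LL * DIM('a) * (r + Cm + 1)) ^ (DIM('a) - 1) * hausdorff_const (DIM('a) - 1)
       = c1 * (r + (Cm + 1)) ^ (DIM('a) - 1)"
    proof -
      have "(2 * LL * DIM('a) * (r + Cm + 1)) ^ (DIM('a) - 1) = (2 * LL * DIM('a)) ^ (DIM('a) - 1) * (r + (Cm + 1)) ^ (DIM('a) - 1)"
        by (simp only: power_mult_distrib add.assoc)
      then show ?thesis by (simp only: c1_def mult_ac)
    qed
    finally show "hausdorff_outer (DIM('a) - 1) A \<le> ennreal (c1 * (r + (Cm + 1)) ^ (DIM('a) - 1))" .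
  qed
  show ?thesis using c10 c20 main by blast
qed

lemma gauss_le: "gauss_density (x::'a::euclidean_space) \<le> exp (- (norm x)\<^sup>2 / 2)"
proof -
  have "1 \<le> (2 * pi) powr (real DIM('a) / 2)" using pi_gt3 by (intro ge_one_powr_ge_zero) auto
  then have "(2 * pi) powr (- real DIM('a) / 2) \<le> 1"
    using powr_minus_divide[of "2*pi" "real DIM('a) / 2"] by (simp add: divide_le_eq)
  then show ?thesis unfolding gauss_density_def
    using mult_right_mono[of "(2 * pi) powr (- real DIM('a) / 2)" 1 "exp (- (norm x)\<^sup>2 / 2)"] by simp
qed

theorem proposition4p2:
  fixes \<Omega> :: "'a::euclidean_space set" and lam :: real
  assumes "domain \<Omega>" and "condition_D \<Omega>"
    and "0 < lam" and "lam < 1"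
  shows "\<exists>C>0. \<forall>u :: 'a \<Rightarrow> real.
     smooth_on_closure \<Omega> u
     \<longrightarrow> (\<forall>\<epsilon>>0. \<exists>R. \<forall>x\<in>\<Omega>. norm x > R \<longrightarrow> \<bar>u x\<bar> < \<epsilon>)
     \<longrightarrow> bdd_above ((\<lambda>x. norm (grad u x)) ` \<Omega>)
     \<longrightarrow> (let G = (SUP x\<in>\<Omega>. norm (grad u x)); M = (SUP x\<in>\<Omega>. \<bar>u x\<bar>) in
          (\<integral>\<^sup>+ x \<in> frontier \<Omega>. ennreal (exp (lam * (u x)\<^sup>2) * gauss_density x)
              \<partial>hausdorff_measure (DIM('a) - 1))
          \<le> ennreal (C * exp ((G + M)\<^sup>2) * (G * (G + M) + 1)))"
proof -
  obtain c1 c2 where c: "0 \<le> c1" "0 \<le> c2" and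
    H: "\<And>r A. 0 \<le> r \<Longrightarrow> A \<subseteq> frontier \<Omega> \<inter> cball 0 r \<Longrightarrow>
      hausdorff_outer (DIM('a) - 1) A \<le> ennreal (c1 * (r + c2) ^ (DIM('a) - 1))"
    using frontier_hbound[OF assms(2)] by blast
  obtain B where B: "0 \<le> B" and IB: "\<And>A f. 0 \<le> A \<Longrightarrow> (\<forall>x\<in>frontier \<Omega>. 0 \<le> f x \<and> f x \<le> A * exp (- (norm x)\<^sup>2 / 2)) \<Longrightarrow>
     (\<integral>\<^sup>+ x \<in> frontier \<Omega>. ennreal (f x) \<partial>hausdorff_measure (DIM('a) - 1)) \<le> ennreal (A * B)"
    using layer_bound[of "frontier \<Omega>" "DIM('a) - 1" c1 c2 "DIM('a) - 1", OF H c] by blast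
  have ne: "\<Omega> \<noteq> {}" using assms(1) by (simp add: domain_def)
  show ?thesis
  proof (intro exI[of _ "B + 1"] conjI allI impI)
    show "0 < B + 1" using B by simp
    fix u :: "'a \<Rightarrow> real"
    assume sm: "smooth_on_closure \<Omega> u"
      and dec: "\<forall>\<epsilon>>0. \<exists>R. \<forall>x\<in>\<Omega>. norm x > R \<longrightarrow> \<bar>u x\<bar> < \<epsilon>"
      and bg: "bdd_above ((\<lambda>x. norm (grad u x)) ` \<Omega>)"
    define G where "G = (SUP x\<in>\<Omega>. norm (grad u x))"
    define M where "M = (SUP x\<in>\<Omega>. \<bar>u x\<bar>)"
    have cont: "continuous_on (closure \<Omega>) u"
    proof -
      obtain U where U: "closure \<Omega> \<subseteq> U" "smooth_on U u" using sm by (auto simp: smooth_on_closure_def)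
      then have "continuous_on U u" by (simp add: smooth_on_def) (metis C_k_on.simps(1))
      then show ?thesis using U(1) continuous_on_subset by blast
    qed
    obtain R0 where R0: "\<forall>x\<in>\<Omega>. norm x > R0 \<longrightarrow> \<bar>u x\<bar> < 1" using dec by (meson zero_less_one)
    have "compact (closure \<Omega> \<inter> cball 0 R0)" by (intro closed_Int_compact) auto
    then have "compact (u ` (closure \<Omega> \<inter> cball 0 R0))"
      using compact_continuous_image continuous_on_subset[OF cont, of "closure \<Omega> \<inter> cball 0 R0"] by blast
    then have "bounded (u ` (closure \<Omega> \<inter> cball 0 R0))" by (rule compact_imp_bounded)
    then obtain B0 where B0: "\<forall>y\<in>u ` (closure \<Omega> \<inter> cball 0 R0). norm y \<le> B0"
      unfolding bounded_iff by blast
    have ub: "\<bar>u x\<bar> \<le> max 1 B0" if "x \<in> \<Omega>" for x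
    proof (cases "norm x > R0")
      case True
      then have "\<bar>u x\<bar> < 1" using R0 that by blast
      then show ?thesis by linarith
    next
      case False
      then have "x \<in> closure \<Omega> \<inter> cball 0 R0" using that closure_subset by auto
      then have "norm (u x) \<le> B0" using B0 by blast
      then show ?thesis by simp
    qed
    have bu: "bdd_above ((\<lambda>x. \<bar>u x\<bar>) ` \<Omega>)" using ub by (intro bdd_aboveI2) 
    have uM: "\<bar>u x\<bar> \<le> M" if "x \<in> \<Omega>" for x unfolding M_def using bu that by (rule cSUP_upper2) simp
    have uMf: "\<bar>u x\<bar> \<le> M" if "x \<in> frontier \<Omega>" for x
    proof -
      have "x \<in> closure \<Omega>" using that by (simp add: frontier_def)
      then show ?thesis
        using continuous_le_on_closure[of \<Omega> "\<lambda>x. \<bar>u x\<bar>" x M] continuous_on_rabs[OF cont] uM by blast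
    qed
    obtain x0 where x0: "x0 \<in> \<Omega>" using ne by blast
    have M0: "0 \<le> M" using uM[OF x0] by linarith
    have G0: "0 \<le> G" unfolding G_def using bg x0 by (intro cSUP_upper2[of _ _ x0]) auto
    let ?f = "\<lambda>x. exp (lam * (u x)\<^sup>2) * gauss_density x"
    have fb: "\<forall>x\<in>frontier \<Omega>. 0 \<le> ?f x \<and> ?f x \<le> exp (lam * M\<^sup>2) * exp (- (norm x)\<^sup>2 / 2)"
    proof
      fix x assume x: "x \<in> frontier \<Omega>"
      have gd0: "0 \<le> gauss_density x" by (simp add: gauss_density_def)
      have "(u x)\<^sup>2 \<le> M\<^sup>2" using uMf[OF x] M0 by (metis abs_le_square_iff abs_of_nonneg)
      then have "lam * (u x)\<^sup>2 \<le> lam * M\<^sup>2" using assms(3) by (simp add: mult_left_mono)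
      then have "exp (lam * (u x)\<^sup>2) \<le> exp (lam * M\<^sup>2)" by simp
      then show "0 \<le> ?f x \<and> ?f x \<le> exp (lam * M\<^sup>2) * exp (- (norm x)\<^sup>2 / 2)"
        using gd0 gauss_le[of x] by (simp add: mult_mono)
    qed
    have I: "(\<integral>\<^sup>+ x \<in> frontier \<Omega>. ennreal (?f x) \<partial>hausdorff_measure (DIM('a) - 1)) \<le> ennreal (exp (lam * M\<^sup>2) * B)"
      by (rule IB[OF _ fb]) simp
    have "exp (lam * M\<^sup>2) * B \<le> (B + 1) * exp ((G + M)\<^sup>2) * (G * (G + M) + 1)"
    proof -
      have "lam * M\<^sup>2 \<le> M\<^sup>2" using assms(3,4) by (simp add: mult_left_le_one_le)
      also have "M\<^sup>2 \<le> (G + M)\<^sup>2" using G0 M0 by (intro power_mono) auto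
      finally have e: "exp (lam * M\<^sup>2) \<le> exp ((G + M)\<^sup>2)" by simp
      have "exp (lam * M\<^sup>2) * B \<le> exp ((G + M)\<^sup>2) * (B + 1)" using e B by (intro mult_mono) auto
      also have "\<dots> \<le> exp ((G + M)\<^sup>2) * (B + 1) * (G * (G + M) + 1)"
      proof -
        have "1 \<le> G * (G + M) + 1" using G0 M0 by simp
        moreover have "0 \<le> exp ((G + M)\<^sup>2) * (B + 1)" using B by simp
        ultimately show ?thesis using mult_left_mono[of 1 "G * (G + M) + 1" "exp ((G + M)\<^sup>2) * (B + 1)"] by simp
      qed
      finally show ?thesis by (simp add: mult_ac)
    qed
    then have "(\<integral>\<^sup>+ x \<in> frontier \<Omega>. ennreal (?f x) \<partial>hausdorff_measure (DIM('a) - 1))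
        \<le> ennreal ((B + 1) * exp ((G + M)\<^sup>2) * (G * (G + M) + 1))"
      using I by (meson ennreal_leI order_trans)
    then show "let G = (SUP x\<in>\<Omega>. norm (grad u x)); M = (SUP x\<in>\<Omega>. \<bar>u x\<bar>) in
          (\<integral>\<^sup>+ x \<in> frontier \<Omega>. ennreal (exp (lam * (u x)\<^sup>2) * gauss_density x)
              \<partial>hausdorff_measure (DIM('a) - 1))
          \<le> ennreal ((B + 1) * exp ((G + M)\<^sup>2) * (G * (G + M) + 1))"
      by (simp only: Let_def G_def M_def)
  qed
qed

end
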